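(* Let $A$ (in $\mathcal H$) and $B$ (in $\mathcal K$) be closed densely defined operators with $A\dashv B$ via a (possibly unbounded) intertwining operator $T_{AB}$ and $B\dashv A$ via a (possibly unbounded) intertwining operator $T_{BA}$. Then $\sigma_p(A)=\sigma_p(B)$; if $\xi\in D(A)$ is an eigenvector of $A$ for eigenvalue $\lambda$ then $T_{AB}\xi$ is an eigenvector of $B$ for $\lambda$, and if $\eta\in D(B)$ is an eigenvector of $B$ for eigenvalue $\mu$ then $T_{BA}\eta$ is an eigenvector of $A$ for $\mu$; for each eigenvalue the multiplicities (dimensions of eigenspaces) for $A$ and $B$ coincide.
   Context: A closed densely defined operator $T:D(T)\subseteq\mathcal H\to\mathcal K$ is an intertwining operator for $A$ (in $\mathcal H$) and $B$ (in $\mathcal K$) if $D(A)\subseteq D(T)$ and $AD(A)\subseteq D(T)$, $TD(A)\subseteq D(B)$, and $BT\xi=TA\xi$ for all $\xi\in D(A)$. $A\dashv B$ means there is such an intertwining operator that is injective with densely defined inverse. $\sigma_p$ is the set of eigenvalues. *)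

theory Defs
  imports "HOL-Analysis.Analysis" "HOL-Library.Equipollence"
begin

class complex_inner = real_normed_vector +
  fixes cscale :: "complex \<Rightarrow> 'a \<Rightarrow> 'a" (infixr \<open>*\<^sub>C\<close> 75)
  fixes cinner :: "'a \<Rightarrow> 'a \<Rightarrow> complex"
  assumes cscale_add_right: "c *\<^sub>C (x + y) = c *\<^sub>C x + c *\<^sub>C y"
    and cscale_add_left: "(c + d) *\<^sub>C x = c *\<^sub>C x + d *\<^sub>C x"
    and cscale_cscale: "c *\<^sub>C (d *\<^sub>C x) = (c * d) *\<^sub>C x"
    and cscale_one: "1 *\<^sub>C x = x"
    and scaleR_cscale: "scaleR r x = complex_of_real r *\<^sub>C x"
    and cinner_commute: "cinner x y = cnj (cinner y x)"
    and cinner_add_right: "cinner x (y + z) = cinner x y + cinner x z"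
    and cinner_cscale_right: "cinner x (c *\<^sub>C y) = c * cinner x y"
    and norm_eq_sqrt_cinner: "norm x = sqrt (Re (cinner x x))"

class chilbert_space = complex_inner + complete_space

definition csubspace :: "'a::complex_inner set \<Rightarrow> bool" where
  "csubspace S \<longleftrightarrow> module.subspace cscale S"

definition lin_op :: "'a::complex_inner set \<Rightarrow> ('a \<Rightarrow> 'b::complex_inner) \<Rightarrow> bool" where
  "lin_op D T \<longleftrightarrow> csubspace D \<and>
     (\<forall>x\<in>D. \<forall>y\<in>D. T (x + y) = T x + T y) \<and>
     (\<forall>c. \<forall>x\<in>D. T (c *\<^sub>C x) = c *\<^sub>C T x)"

definition op_graph :: "'a set \<Rightarrow> ('a \<Rightarrow> 'b) \<Rightarrow> ('a \<times> 'b) set" where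
  "op_graph D T = {(x, T x) | x. x \<in> D}"

definition closed_dd_op :: "'a::chilbert_space set \<Rightarrow> ('a \<Rightarrow> 'b::chilbert_space) \<Rightarrow> bool" where
  "closed_dd_op D T \<longleftrightarrow> lin_op D T \<and> closure D = UNIV \<and> closed (op_graph D T)"

definition intertwining :: "'a::chilbert_space set \<Rightarrow> ('a \<Rightarrow> 'b::chilbert_space) \<Rightarrow>
    'a set \<Rightarrow> ('a \<Rightarrow> 'a) \<Rightarrow> 'b set \<Rightarrow> ('b \<Rightarrow> 'b) \<Rightarrow> bool" where
  "intertwining DT T DA A DB B \<longleftrightarrow> closed_dd_op DT T \<and> DA \<subseteq> DT \<and> A ` DA \<subseteq> DT \<and>
     T ` DA \<subseteq> DB \<and> (\<forall>\<xi>\<in>DA. B (T \<xi>) = T (A \<xi>))"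

text \<open>\<open>T\<close> witnesses \<open>A \<stileturn> B\<close>: an injective intertwining operator whose inverse
(with domain the range \<open>T ` DT\<close>) is densely defined.\<close>
definition qa_intertwining :: "'a::chilbert_space set \<Rightarrow> ('a \<Rightarrow> 'b::chilbert_space) \<Rightarrow>
    'a set \<Rightarrow> ('a \<Rightarrow> 'a) \<Rightarrow> 'b set \<Rightarrow> ('b \<Rightarrow> 'b) \<Rightarrow> bool" where
  "qa_intertwining DT T DA A DB B \<longleftrightarrow> intertwining DT T DA A DB B \<and> inj_on T DT \<and>
     closure (T ` DT) = UNIV"

definition eigenvector :: "'a::complex_inner set \<Rightarrow> ('a \<Rightarrow> 'a) \<Rightarrow> complex \<Rightarrow> 'a \<Rightarrow> bool" where
  "eigenvector D A l \<xi> \<longleftrightarrow> \<xi> \<in> D \<and> \<xi> \<noteq> 0 \<and> A \<xi> = l *\<^sub>C \<xi>"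

definition point_spectrum :: "'a::complex_inner set \<Rightarrow> ('a \<Rightarrow> 'a) \<Rightarrow> complex set" where
  "point_spectrum D A = {l. \<exists>\<xi>. eigenvector D A l \<xi>}"

definition eigenspace :: "'a::complex_inner set \<Rightarrow> ('a \<Rightarrow> 'a) \<Rightarrow> complex \<Rightarrow> 'a set" where
  "eigenspace D A l = {\<xi> \<in> D. A \<xi> = l *\<^sub>C \<xi>}"

text \<open>(Algebraic) dimension: \<open>S\<close> and \<open>S'\<close> have bases (over \<open>\<complex>\<close>) of the same cardinality.\<close>
definition cbasis_of :: "'a::complex_inner set \<Rightarrow> 'a set \<Rightarrow> bool" where
  "cbasis_of B S \<longleftrightarrow> B \<subseteq> S \<and> \<not> module.dependent cscale B \<and> module.span cscale B = S"

definition same_dim :: "'a::complex_inner set \<Rightarrow> 'b::complex_inner set \<Rightarrow> bool" where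
  "same_dim S S' \<longleftrightarrow> (\<exists>B B'. cbasis_of B S \<and> cbasis_of B' S' \<and> B \<approx> B')"

end

theory Submission
  imports Defs
begin

unbundle cardinal_syntax

interpretation cvs: vector_space "cscale :: complex \<Rightarrow> 'a \<Rightarrow> 'a::complex_inner"
  by unfold_locales (simp_all add: cscale_add_right cscale_add_left cscale_cscale cscale_one)

lemma lin_op_0: "lin_op D T \<Longrightarrow> T 0 = 0"
  unfolding lin_op_def csubspace_def
  by (metis add_cancel_right_right add_0 cvs.subspace_0)

lemma lin_op_sum:
  assumes "lin_op D T" "finite S" "S \<subseteq> D"
  shows "T (\<Sum>v\<in>S. c v *\<^sub>C v) = (\<Sum>v\<in>S. c v *\<^sub>C T v)"
  using assms(2,3)
proof (induction S rule: finite_induct)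
  case empty then show ?case using lin_op_0[OF assms(1)] by simp
next
  case (insert x F)
  have sub: "cvs.subspace D" using assms(1) by (simp add: lin_op_def csubspace_def)
  have "(\<Sum>v\<in>F. c v *\<^sub>C v) \<in> D"
    using insert.prems by (intro cvs.subspace_sum[OF sub] cvs.subspace_scale[OF sub]) auto
  moreover have "c x *\<^sub>C x \<in> D" using insert.prems cvs.subspace_scale[OF sub] by auto
  ultimately show ?case using insert assms(1) unfolding lin_op_def by simp
qed

lemma indep_image:
  assumes lin: "lin_op D f" and inj: "inj_on f D" and ID: "I \<subseteq> D"
    and ind: "\<not> cvs.dependent I"
  shows "\<not> cvs.dependent (f ` I)"
proof
  assume "cvs.dependent (f ` I)"
  then obtain t u where t: "finite t" "t \<subseteq> f ` I" "(\<Sum>v\<in>t. u v *\<^sub>C v) = 0" and v: "\<exists>v\<in>t. u v \<noteq> 0"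
    unfolding cvs.dependent_explicit by blast
  obtain s where s: "s \<subseteq> I" "t = f ` s" using t(2) by (meson subset_imageE)
  have injs: "inj_on f s" using inj_on_subset[OF inj] s ID by blast
  have fs: "finite s" using t(1) s(2) injs finite_image_iff by blast
  have sub: "cvs.subspace D" using lin by (simp add: lin_op_def csubspace_def)
  have "f (\<Sum>w\<in>s. u (f w) *\<^sub>C w) = (\<Sum>w\<in>s. u (f w) *\<^sub>C f w)"
    using lin_op_sum[OF lin fs, of "\<lambda>w. u (f w)"] s ID by blast
  also have "\<dots> = (\<Sum>v\<in>t. u v *\<^sub>C v)" using s(2) injs by (simp add: sum.reindex)
  also have "\<dots> = f 0" using t(3) lin_op_0[OF lin] by simp
  finally have "(\<Sum>w\<in>s. u (f w) *\<^sub>C w) = 0"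
    apply (rule inj_onD[OF inj])
    using s ID by (auto intro!: cvs.subspace_sum[OF sub] cvs.subspace_scale[OF sub] cvs.subspace_0[OF sub])
  moreover obtain w where "w \<in> s" "u (f w) \<noteq> 0" using v s(2) by blast
  ultimately have "cvs.dependent I" unfolding cvs.dependent_explicit
    using fs s(1) by (intro exI[of _ s] exI[of _ "\<lambda>w. u (f w)"]) blast
  then show False using ind by blast
qed

lemma span_fin:
  assumes "x \<in> cvs.span S" shows "\<exists>F. finite F \<and> F \<subseteq> S \<and> x \<in> cvs.span F"
proof -
  obtain t r where "x = (\<Sum>a\<in>t. r a *\<^sub>C a)" "finite t" "t \<subseteq> S"
    using assms unfolding cvs.span_explicit by blast
  then show ?thesis
    by (intro exI[of _ t]) (auto simp: cvs.span_explicit)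
qed


lemma lepoll_ordLeq: "A \<lesssim> B \<longleftrightarrow> |A| \<le>o |B|"
  by (simp add: lepoll_def card_of_ordLeq[symmetric])

lemma lists_len_lepoll:
  assumes inf: "infinite A"
  shows "{xs. set xs \<subseteq> A \<and> length xs = n} \<lesssim> A"
proof (induction n)
  case 0
  obtain a where "a \<in> A" using inf by (metis ex_in_conv finite.emptyI)
  then have 1: "{xs. set xs \<subseteq> A \<and> length xs = 0} \<subseteq> (\<lambda>_. []) ` A" by auto
  have 2: "(\<lambda>_. []) ` A \<lesssim> A" by (rule image_lepoll)
  show ?case by (rule lepoll_trans[OF subset_imp_lepoll[OF 1] 2])
next
  case (Suc n)
  let ?L = "\<lambda>n. {xs. set xs \<subseteq> A \<and> length xs = n}"
  have "?L (Suc n) \<lesssim> A \<times> ?L n"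
    unfolding lepoll_def
  proof (intro exI[of _ "\<lambda>xs. (hd xs, tl xs)"] conjI)
    show "inj_on (\<lambda>xs. (hd xs, tl xs)) (?L (Suc n))"
    proof (rule inj_onI)
      fix x y assume "x \<in> ?L (Suc n)" "y \<in> ?L (Suc n)" "(hd x, tl x) = (hd y, tl y)"
      then show "x = y" by (cases x; cases y) auto
    qed
    show "(\<lambda>xs. (hd xs, tl xs)) ` ?L (Suc n) \<subseteq> A \<times> ?L n"
      by (auto simp: length_Suc_conv)
  qed
  also have "A \<times> ?L n \<lesssim> A \<times> A" using Suc.IH by (simp add: times_lepoll_mono)
  also have "A \<times> A \<lesssim> A"
    using card_of_Times_same_infinite[OF inf] by (metis card_of_ordIso eqpoll_def eqpoll_imp_lepoll)
  finally show ?case .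
qed

lemma Fpow_lepoll:
  assumes inf: "infinite A" shows "|Fpow A| \<le>o |A|"
proof -
  let ?L = "\<lambda>n. {xs. set xs \<subseteq> A \<and> length xs = n}"
  have "Fpow A \<subseteq> set ` (\<Union>n\<in>(UNIV::nat set). ?L n)"
  proof
    fix F assume "F \<in> Fpow A"
    then have "finite F" "F \<subseteq> A" by (auto simp: Fpow_def)
    then obtain xs where "set xs = F" using finite_list by blast
    then show "F \<in> set ` (\<Union>n\<in>(UNIV::nat set). ?L n)" using \<open>F \<subseteq> A\<close> by blast
  qed
  then have "Fpow A \<lesssim> (\<Union>n\<in>(UNIV::nat set). ?L n)" by (rule subset_image_lepoll)
  moreover have "|\<Union>n\<in>(UNIV::nat set). ?L n| \<le>o |A|"
  proof (rule card_of_UNION_ordLeq_infinite[OF inf])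
    show "|UNIV::nat set| \<le>o |A|" using infinite_le_lepoll inf lepoll_ordLeq by blast
    show "\<forall>n\<in>UNIV. |?L n| \<le>o |A|" using lists_len_lepoll[OF inf] lepoll_ordLeq by blast
  qed
  moreover note lepoll_ordLeq[of "\<Union>n\<in>(UNIV::nat set). ?L n" A]
  ultimately have "Fpow A \<lesssim> A" by (meson lepoll_trans)
  then show ?thesis by (simp add: lepoll_ordLeq)
qed

lemma indep_le:
  assumes ind: "\<not> cvs.dependent I" and sp: "I \<subseteq> cvs.span Bs"
  shows "I \<lesssim> Bs"
proof (cases "finite Bs")
  case True
  then have "finite I \<and> card I \<le> card Bs" using cvs.independent_span_bound ind sp by blast
  then show ?thesis using lepoll_iff_card_le True by blast
next
  case False
  have "I \<subseteq> (\<Union>F\<in>Fpow Bs. I \<inter> cvs.span F)"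
  proof
    fix x assume "x \<in> I"
    then obtain F where "finite F" "F \<subseteq> Bs" "x \<in> cvs.span F" using span_fin[of x Bs] sp \<open>x \<in> I\<close> by blast
    then show "x \<in> (\<Union>F\<in>Fpow Bs. I \<inter> cvs.span F)" using \<open>x \<in> I\<close> by (auto simp: Fpow_def)
  qed
  moreover have "|\<Union>F\<in>Fpow Bs. I \<inter> cvs.span F| \<le>o |Bs|"
  proof (rule card_of_UNION_ordLeq_infinite[OF False])
    show "|Fpow Bs| \<le>o |Bs|"
      using Fpow_lepoll[OF False] .
    show "\<forall>F\<in>Fpow Bs. |I \<inter> cvs.span F| \<le>o |Bs|"
    proof
      fix F assume "F \<in> Fpow Bs"
      then have "finite F" by (simp add: Fpow_def)
      then have "finite (I \<inter> cvs.span F)"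
        using cvs.independent_span_bound[of F "I \<inter> cvs.span F"] ind cvs.independent_mono by blast
      then show "|I \<inter> cvs.span F| \<le>o |Bs|"
        using finite_lepoll_infinite[OF False] lepoll_ordLeq by blast
    qed
  qed
  moreover note lepoll_ordLeq[of "\<Union>F\<in>Fpow Bs. I \<inter> cvs.span F" Bs]
  ultimately show ?thesis by (meson lepoll_trans subset_imp_lepoll)
qed

lemma eigenspace_sub:
  assumes "lin_op D A" shows "cvs.subspace (eigenspace D A l)"
proof -
  have sub: "cvs.subspace D" using assms by (simp add: lin_op_def csubspace_def)
  show ?thesis
  proof (rule cvs.subspaceI)
    show "0 \<in> eigenspace D A l" using lin_op_0[OF assms] cvs.subspace_0[OF sub]
      by (simp add: eigenspace_def)
  next
    fix x y assume "x \<in> eigenspace D A l" "y \<in> eigenspace D A l"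
    then show "x + y \<in> eigenspace D A l" using assms cvs.subspace_add[OF sub]
      by (auto simp: eigenspace_def lin_op_def cscale_add_right)
  next
    fix c x assume "x \<in> eigenspace D A l"
    then show "c *\<^sub>C x \<in> eigenspace D A l" using assms cvs.subspace_scale[OF sub]
      by (auto simp: eigenspace_def lin_op_def cscale_cscale mult.commute)
  qed
qed

lemma basis_of_sub:
  assumes "cvs.subspace S" shows "\<exists>Bs. cbasis_of Bs S"
proof -
  obtain Bs where "Bs \<subseteq> S" "\<not> cvs.dependent Bs" "S \<subseteq> cvs.span Bs" "card Bs = cvs.dim S"
    by (rule cvs.basis_exists[of S])
  moreover have "cvs.span Bs \<subseteq> S" using cvs.span_minimal[OF \<open>Bs \<subseteq> S\<close> assms] .
  ultimately show ?thesis unfolding cbasis_of_def by blast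
qed

lemma eig_map:
  assumes qa: "qa_intertwining DT T DA A DB B" and l: "\<xi> \<in> eigenspace DA A l"
  shows "T \<xi> \<in> eigenspace DB B l"
proof -
  have i: "intertwining DT T DA A DB B" and lin: "lin_op DT T"
    using qa by (auto simp: qa_intertwining_def intertwining_def closed_dd_op_def)
  have "\<xi> \<in> DA" "A \<xi> = l *\<^sub>C \<xi>" using l by (auto simp: eigenspace_def)
  moreover have "\<xi> \<in> DT" using i \<open>\<xi> \<in> DA\<close> by (auto simp: intertwining_def)
  ultimately show ?thesis using i lin unfolding intertwining_def lin_op_def eigenspace_def by auto
qed

lemma eig_vec:
  assumes qa: "qa_intertwining DT T DA A DB B" and e: "eigenvector DA A l \<xi>"
  shows "eigenvector DB B l (T \<xi>)"
proof -
  have i: "intertwining DT T DA A DB B" and lin: "lin_op DT T" and inj: "inj_on T DT"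
    using qa by (auto simp: qa_intertwining_def intertwining_def closed_dd_op_def)
  have "\<xi> \<in> eigenspace DA A l" using e by (auto simp: eigenspace_def eigenvector_def)
  then have "T \<xi> \<in> eigenspace DB B l" using eig_map[OF qa] by blast
  moreover have "\<xi> \<in> DT" "\<xi> \<noteq> 0" using i e by (auto simp: intertwining_def eigenvector_def)
  moreover have "0 \<in> DT" using lin cvs.subspace_0 unfolding lin_op_def csubspace_def by blast
  ultimately show ?thesis using inj lin_op_0[OF lin] unfolding eigenvector_def eigenspace_def
    by (metis (mono_tags, lifting) inj_onD mem_Collect_eq)
qed

lemma dim_le:
  assumes qa: "qa_intertwining DT T DA A DB B" and linA: "lin_op DA A"
    and bA: "cbasis_of BA (eigenspace DA A l)" and bB: "cbasis_of BB (eigenspace DB B l)"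
  shows "BA \<lesssim> BB"
proof -
  have i: "intertwining DT T DA A DB B" and lin: "lin_op DT T" and inj: "inj_on T DT"
    using qa by (auto simp: qa_intertwining_def intertwining_def closed_dd_op_def)
  have sub: "BA \<subseteq> DT" using bA i by (auto simp: cbasis_of_def eigenspace_def intertwining_def)
  have "\<not> cvs.dependent (T ` BA)"
    using indep_image[OF lin inj sub] bA by (simp add: cbasis_of_def)
  moreover have "T ` BA \<subseteq> cvs.span BB"
    using bA bB eig_map[OF qa] by (auto simp: cbasis_of_def)
  ultimately have "T ` BA \<lesssim> BB" by (rule indep_le)
  moreover have "BA \<approx> T ` BA" using inj_on_subset[OF inj sub]
    by (simp add: eqpoll_sym inj_on_image_eqpoll_self)
  ultimately show ?thesis using lepoll_trans1 by blast
qed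

theorem proposition3p20:
  fixes DA :: "'h::chilbert_space set" and A :: "'h \<Rightarrow> 'h"
    and DB :: "'k::chilbert_space set" and B :: "'k \<Rightarrow> 'k"
    and DTAB :: "'h set" and TAB :: "'h \<Rightarrow> 'k"
    and DTBA :: "'k set" and TBA :: "'k \<Rightarrow> 'h"
  assumes "closed_dd_op DA A" and "closed_dd_op DB B"
    and "qa_intertwining DTAB TAB DA A DB B"
    and "qa_intertwining DTBA TBA DB B DA A"
  shows "point_spectrum DA A = point_spectrum DB B
    \<and> (\<forall>l \<xi>. eigenvector DA A l \<xi> \<longrightarrow> eigenvector DB B l (TAB \<xi>))
    \<and> (\<forall>m \<eta>. eigenvector DB B m \<eta> \<longrightarrow> eigenvector DA A m (TBA \<eta>))
    \<and> (\<forall>l\<in>point_spectrum DA A. same_dim (eigenspace DA A l) (eigenspace DB B l))"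
proof -
  have linA: "lin_op DA A" and linB: "lin_op DB B"
    using assms(1,2) by (auto simp: closed_dd_op_def)
  have e1: "\<forall>l \<xi>. eigenvector DA A l \<xi> \<longrightarrow> eigenvector DB B l (TAB \<xi>)"
    using eig_vec[OF assms(3)] by blast
  have e2: "\<forall>m \<eta>. eigenvector DB B m \<eta> \<longrightarrow> eigenvector DA A m (TBA \<eta>)"
    using eig_vec[OF assms(4)] by blast
  have ps: "point_spectrum DA A = point_spectrum DB B"
    using e1 e2 unfolding point_spectrum_def by blast
  have sd: "same_dim (eigenspace DA A l) (eigenspace DB B l)" for l
  proof -
    obtain BA where bA: "cbasis_of BA (eigenspace DA A l)"
      using basis_of_sub[OF eigenspace_sub[OF linA]] by blast
    obtain BB where bB: "cbasis_of BB (eigenspace DB B l)"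
      using basis_of_sub[OF eigenspace_sub[OF linB]] by blast
    have "BA \<lesssim> BB" using dim_le[OF assms(3) linA bA bB] .
    moreover have "BB \<lesssim> BA" using dim_le[OF assms(4) linB bB bA] .
    ultimately have "BA \<approx> BB" by (rule lepoll_antisym)
    then show ?thesis using bA bB unfolding same_dim_def by blast
  qed
  show ?thesis using ps e1 e2 sd by blast
qed

end
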